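(* Let $M$ be a strongly regular sequence, $\Omega\subset\mathbb{R}^n$ open, and let $\varphi$ be a non-zero element of $\mathcal{C}_M(\Omega)$ with zero set $X$. Assume that $\varphi$ satisfies the $\mathcal{C}_M$ Łojasiewicz condition, and let $X_\infty=\{a\in X : T_a\varphi=0\}$ be the set of points of flatness of $\varphi$. Then $X\setminus X_\infty$ is dense in the boundary $\partial X$ of $X$.
   Context: Multi-index notation: $J=(j_1,\dots,j_n)$, $j=j_1+\dots+j_n$, $J!=j_1!\cdots j_n!$, $D^J=\partial^j/\partial x_1^{j_1}\cdots\partial x_n^{j_n}$. $T_a\varphi=\sum_J \frac{1}{J!}D^J\varphi(a)x^J$ is the formal Taylor series at $a$. A sequence $M=(M_j)_{j\ge0}$ of reals is strongly regular if: $M$ is increasing with $M_0=1$; $M_{j+1}/M_j$ is increasing; there is $A>0$ with $M_{j+k}\le A^{j+k}M_jM_k$ for all $j,k$; and there is $A>0$ with $\sum_{j\ge k}\frac{M_j}{(j+1)M_{j+1}}\le A\frac{M_k}{M_{k+1}}$ for all $k$. $h_M(t)=\inf_{j\ge0}t^jM_j$ for $t>0$, $h_M(0)=0$. $\mathcal{C}_M(\Omega)$ is the space of $f\in\mathcal{C}^\infty(\Omega)$ such that for every compact $K\subset\Omega$ there are $C,\sigma>0$ with $\vert D^Jf(x)\vert\le C\sigma^j j!M_j$ for all $J$, $x\in K$. A non-zero $\varphi\in\mathcal{C}_M(\Omega)$ with zero set $X$ satisfies the $\mathcal{C}_M$ Łojasiewicz condition if for every compact $K\subset\Omega$ and every real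 $\lambda>0$ there exist $C,\sigma>0$ such that for all $J\in\mathbb{N}^n$ and all $x\in K\setminus X$, $\vert D^J(1/\varphi)(x)\vert\le \dfrac{C\sigma^j j!M_j}{h_M(\lambda\,\mathrm{dist}(x,X))}$. *)

theory Defs
  imports "HOL-Analysis.Analysis"
begin

definition pdiff :: "'n::finite \<Rightarrow> (real^'n \<Rightarrow> real) \<Rightarrow> real^'n \<Rightarrow> real" where
  "pdiff i f = (\<lambda>x. frechet_derivative f (at x) (axis i 1))"

text \<open>Iterated partial derivative along a word of coordinate directions; for a smooth
  function D w f equals D^J f, where J counts the occurrences of each index in w,
  and the order j of J is the length of w.\<close>
fun Dw :: "'n::finite list \<Rightarrow> (real^'n \<Rightarrow> real) \<Rightarrow> real^'n \<Rightarrow> real" where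
  "Dw [] f = f"
| "Dw (i # w) f = pdiff i (Dw w f)"

definition smooth_on :: "(real^'n::finite) set \<Rightarrow> (real^'n \<Rightarrow> real) \<Rightarrow> bool" where
  "smooth_on \<Omega> f \<longleftrightarrow> (\<forall>w. \<forall>x\<in>\<Omega>. Dw w f differentiable (at x))"

definition strongly_regular :: "(nat \<Rightarrow> real) \<Rightarrow> bool" where
  "strongly_regular M \<longleftrightarrow>
     incseq M \<and> M 0 = 1 \<and>
     incseq (\<lambda>j. M (Suc j) / M j) \<and>
     (\<exists>A>0. \<forall>j k. M (j + k) \<le> A ^ (j + k) * M j * M k) \<and>
     (\<exists>A>0. \<forall>k N. (\<Sum>j=k..N. M j / ((real j + 1) * M (Suc j))) \<le> A * M k / M (Suc k))"

definition hM :: "(nat \<Rightarrow> real) \<Rightarrow> real \<Rightarrow> real" where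
  "hM M t = (if t = 0 then 0 else (INF j. t ^ j * M j))"

definition CM :: "(nat \<Rightarrow> real) \<Rightarrow> (real^'n::finite) set \<Rightarrow> (real^'n \<Rightarrow> real) set" where
  "CM M \<Omega> = {f. smooth_on \<Omega> f \<and>
     (\<forall>K. compact K \<and> K \<subseteq> \<Omega> \<longrightarrow>
        (\<exists>C>0. \<exists>\<sigma>>0. \<forall>w. \<forall>x\<in>K.
           \<bar>Dw w f x\<bar> \<le> C * \<sigma> ^ length w * fact (length w) * M (length w)))}"

definition zero_set :: "(real^'n::finite) set \<Rightarrow> (real^'n \<Rightarrow> real) \<Rightarrow> (real^'n) set" where
  "zero_set \<Omega> \<phi> = {x\<in>\<Omega>. \<phi> x = 0}"

definition CM_lojasiewicz :: "(nat \<Rightarrow> real) \<Rightarrow> (real^'n::finite) set \<Rightarrow> (real^'n \<Rightarrow> real) \<Rightarrow> bool" where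
  "CM_lojasiewicz M \<Omega> \<phi> \<longleftrightarrow>
     (\<forall>K. compact K \<and> K \<subseteq> \<Omega> \<longrightarrow> (\<forall>lam>0.
        (\<exists>C>0. \<exists>\<sigma>>0. \<forall>w. \<forall>x\<in>K - zero_set \<Omega> \<phi>.
           \<bar>Dw w (\<lambda>y. 1 / \<phi> y) x\<bar> \<le>
             C * \<sigma> ^ length w * fact (length w) * M (length w)
               / hM M (lam * infdist x (zero_set \<Omega> \<phi>)))))"

definition flat_points :: "(real^'n::finite) set \<Rightarrow> (real^'n \<Rightarrow> real) \<Rightarrow> (real^'n) set" where
  "flat_points \<Omega> \<phi> = {a\<in>zero_set \<Omega> \<phi>. \<forall>w. Dw w \<phi> a = 0}"

end

theory Submission
  imports Defs
begin


lemma cmp1d: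
  fixes g g' :: "real \<Rightarrow> real"
  assumes t: "0 \<le> t"
    and d: "\<And>s. 0 \<le> s \<Longrightarrow> s \<le> t \<Longrightarrow> (g has_real_derivative g' s) (at s)"
    and b: "\<And>s. 0 \<le> s \<Longrightarrow> s \<le> t \<Longrightarrow> \<bar>g' s\<bar> \<le> c * s ^ j / fact j"
    and g0: "g 0 = 0"
  shows "\<bar>g t\<bar> \<le> c * t ^ Suc j / fact (Suc j)"
proof -
  have P: "((\<lambda>s. c * s ^ Suc j / fact (Suc j)) has_real_derivative c * s ^ j / fact j) (at s)" for s
  proof -
    have "((\<lambda>s. c * s ^ Suc j / fact (Suc j)) has_real_derivative c * (real (Suc j) * s ^ j) / fact (Suc j)) (at s)"
      using DERIV_cdivide[OF DERIV_cmult[OF DERIV_pow[of "Suc j" s]], of c "fact (Suc j)"] by simp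
    moreover have "c * (real (Suc j) * s ^ j) / fact (Suc j) = c * s ^ j / fact j"
    proof -
      have "fact (Suc j) = (real (Suc j)) * (fact j :: real)" by (simp add: fact_Suc)
      moreover have "(fact j :: real) > 0" by simp
      ultimately show ?thesis by (simp add: field_simps del: of_nat_Suc)
    qed
    ultimately show ?thesis by simp
  qed
  have "(\<lambda>s. c * s ^ Suc j / fact (Suc j) - g s) 0 \<le> (\<lambda>s. c * s ^ Suc j / fact (Suc j) - g s) t"
    apply (rule DERIV_nonneg_imp_nondecreasing[OF t])
    subgoal for x
      apply (rule exI[of _ "c * x ^ j / fact j - g' x"])
      using DERIV_diff[OF P[of x] d[of x]] b[of x] by auto
    done
  moreover have "(\<lambda>s. c * s ^ Suc j / fact (Suc j) + g s) 0 \<le> (\<lambda>s. c * s ^ Suc j / fact (Suc j) + g s) t"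
    apply (rule DERIV_nonneg_imp_nondecreasing[OF t])
    subgoal for x
      apply (rule exI[of _ "c * x ^ j / fact j + g' x"])
      using DERIV_add[OF P[of x] d[of x]] b[of x] by auto
    done
  ultimately show ?thesis using g0 by auto
qed

lemma hM_nonneg:
  assumes "\<And>j. M j \<ge> 0" "t \<ge> 0"
  shows "hM M t \<ge> 0"
  unfolding hM_def using assms by (auto intro!: cINF_greatest)

lemma hM_le:
  assumes "\<And>j. M j \<ge> 0" "t > 0"
  shows "hM M t \<le> t ^ j * M j"
  unfolding hM_def using assms
  by (auto intro!: cINF_lower bdd_belowI2[where m=0])

lemma hM_ge:
  assumes "t > 0" "\<And>j. c \<le> t ^ j * M j"
  shows "c \<le> hM M t"
  unfolding hM_def using assms by (auto intro!: cINF_greatest)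

lemma hM_sq:
  assumes M0: "\<And>j. M j \<ge> 0" and t: "t > 0" and A: "A > 0"
    and mg: "\<And>j k. M (j + k) \<le> A ^ (j + k) * M j * M k"
  shows "hM M (t / A) \<le> (hM M t)^2"
proof -
  have h0: "hM M (t/A) \<ge> 0" using hM_nonneg[OF M0] t A by simp
  have "sqrt (hM M (t/A)) \<le> t ^ j * M j" for j
  proof -
    have "hM M (t/A) \<le> (t/A) ^ (j+j) * M (j+j)" using hM_le[OF M0, of "t/A"] t A by simp
    also have "\<dots> \<le> (t/A) ^ (j+j) * (A ^ (j + j) * M j * M j)"
      using mg[of j j] t A by (intro mult_left_mono) auto
    also have "\<dots> = (t ^ j * M j)^2"
      using A by (simp add: power_divide power_add power2_eq_square field_simps)
    finally show ?thesis using M0[of j] t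
      by (metis abs_of_nonneg real_sqrt_abs real_sqrt_le_mono mult_nonneg_nonneg zero_le_power less_imp_le)
  qed
  then have "sqrt (hM M (t/A)) \<le> hM M t" by (rule hM_ge[OF t])
  then show ?thesis using h0
    by (metis real_sqrt_ge_zero real_sqrt_pow2 power_mono)
qed


lemma deriv_dir:
  fixes f :: "real^'n::finite \<Rightarrow> real"
  assumes "f differentiable (at x)"
  shows "frechet_derivative f (at x) v = (\<Sum>i\<in>UNIV. v$i * pdiff i f x)"
proof -
  let ?L = "frechet_derivative f (at x)"
  have "bounded_linear ?L" using assms frechet_derivative_works has_derivative_bounded_linear by blast
  then have lin: "linear ?L" by (rule bounded_linear.linear)
  have "?L v = ?L (\<Sum>i\<in>UNIV. v$i *\<^sub>R axis i 1)"
    using basis_expansion[of v] by (simp add: scalar_mult_eq_scaleR)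
  also have "\<dots> = (\<Sum>i\<in>UNIV. v$i * ?L (axis i 1))"
    using lin by (simp add: linear_sum linear_scale)
  finally show ?thesis by (simp add: pdiff_def)
qed

lemma line_deriv:
  fixes f :: "real^'n::finite \<Rightarrow> real"
  assumes "f differentiable (at (p + s *\<^sub>R v))"
  shows "((\<lambda>s. f (p + s *\<^sub>R v)) has_real_derivative frechet_derivative f (at (p + s *\<^sub>R v)) v) (at s)"
proof -
  let ?L = "frechet_derivative f (at (p + s *\<^sub>R v))"
  have fd: "(f has_derivative ?L) (at (p + s *\<^sub>R v))" using assms frechet_derivative_works by blast
  then have lin: "linear ?L" using has_derivative_bounded_linear bounded_linear.linear by blast
  have i: "((\<lambda>s. p + s *\<^sub>R v) has_derivative (\<lambda>h. h *\<^sub>R v)) (at s)"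
    by (auto intro!: derivative_eq_intros)
  have "((f \<circ> (\<lambda>s. p + s *\<^sub>R v)) has_derivative (?L \<circ> (\<lambda>h. h *\<^sub>R v))) (at s)"
    by (rule diff_chain_at[OF i]) (use fd in simp)
  moreover have "(?L \<circ> (\<lambda>h. h *\<^sub>R v)) = (*) (?L v)"
    using lin by (auto simp: linear_scale fun_eq_iff)
  ultimately show ?thesis by (simp add: has_field_derivative_def o_def)
qed


lemma seg_mem:
  assumes "0 \<le> t" "t \<le> 1"
  shows "p + t *\<^sub>R (y - p) \<in> closed_segment p y"
  unfolding closed_segment_def using assms
  by (auto intro!: exI[of _ t] simp: algebra_simps)

lemma flat_est:
  fixes \<phi> :: "real^'n::finite \<Rightarrow> real"
  assumes sm: "\<forall>w. \<forall>z\<in>closed_segment p y. Dw w \<phi> differentiable (at z)"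
    and flat: "\<forall>w. Dw w \<phi> p = 0"
    and bnd: "\<forall>w. \<forall>z\<in>closed_segment p y. \<bar>Dw w \<phi> z\<bar> \<le> B (length w)"
  shows "\<forall>w. \<forall>t\<in>{0..1}. \<bar>Dw w \<phi> (p + t *\<^sub>R (y - p))\<bar>
           \<le> B (length w + j) * (real CARD('n) * norm (y - p)) ^ j * t ^ j / fact j"
proof (induction j)
  case 0
  then show ?case using bnd seg_mem[of _ p y] by simp
next
  case (Suc j)
  show ?case
  proof (intro allI ballI)
    fix w :: "'n list" and t :: real assume t: "t \<in> {0..1}"
    let ?D = "norm (y - p)" and ?N = "real CARD('n)"
    let ?c = "B (length w + Suc j) * (?N * ?D) ^ Suc j"
    define g where "g s = Dw w \<phi> (p + s *\<^sub>R (y - p))" for s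
    define g' where "g' s = frechet_derivative (Dw w \<phi>) (at (p + s *\<^sub>R (y - p))) (y - p)" for s
    have "\<bar>g t\<bar> \<le> ?c * t ^ Suc j / fact (Suc j)"
    proof (rule cmp1d)
      show "0 \<le> t" using t by auto
      show "g 0 = 0" using flat by (simp add: g_def)
    next
      fix s :: real assume s: "0 \<le> s" "s \<le> t"
      then have s1: "s \<le> 1" using t by auto
      have mem: "p + s *\<^sub>R (y - p) \<in> closed_segment p y" using seg_mem s s1 by auto
      then have dif: "Dw w \<phi> differentiable (at (p + s *\<^sub>R (y - p)))" using sm by auto
      show "(g has_real_derivative g' s) (at s)"
        unfolding g_def g'_def by (rule line_deriv[OF dif])
      have "\<bar>g' s\<bar> = \<bar>\<Sum>i\<in>UNIV. (y - p)$i * Dw (i # w) \<phi> (p + s *\<^sub>R (y - p))\<bar>"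
        unfolding g'_def deriv_dir[OF dif] by simp
      also have "\<dots> \<le> (\<Sum>i\<in>UNIV. \<bar>(y - p)$i * Dw (i # w) \<phi> (p + s *\<^sub>R (y - p))\<bar>)"
        by (rule sum_abs)
      also have "\<dots> \<le> (\<Sum>i\<in>(UNIV::'n set). ?D * (B (length w + Suc j) * (?N * ?D) ^ j * s ^ j / fact j))"
      proof (rule sum_mono)
        fix i
        have a: "\<bar>(y - p)$i\<bar> \<le> ?D" by (rule component_le_norm_cart)
        have b: "\<bar>Dw (i # w) \<phi> (p + s *\<^sub>R (y - p))\<bar> \<le> B (length w + Suc j) * (?N * ?D) ^ j * s ^ j / fact j"
          using bspec[OF spec[OF Suc.IH, of "i # w"], of s] s s1 by simp
        show "\<bar>(y - p)$i * Dw (i # w) \<phi> (p + s *\<^sub>R (y - p))\<bar> \<le> ?D * (B (length w + Suc j) * (?N * ?D) ^ j * s ^ j / fact j)"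
          unfolding abs_mult by (rule mult_mono[OF a b]) auto
      qed
      also have "\<dots> = ?c * s ^ j / fact j" by (simp add: algebra_simps)
      finally show "\<bar>g' s\<bar> \<le> ?c * s ^ j / fact j" .
    qed
    then show "\<bar>Dw w \<phi> (p + t *\<^sub>R (y - p))\<bar>
           \<le> B (length w + Suc j) * (?N * ?D) ^ Suc j * t ^ Suc j / fact (Suc j)"
      by (simp add: g_def)
  qed
qed


theorem lemma3p3:
  fixes M :: "nat \<Rightarrow> real" and \<Omega> :: "(real^'n::finite) set" and \<phi> :: "real^'n \<Rightarrow> real"
  assumes "strongly_regular M"
    and "open \<Omega>"
    and "\<phi> \<in> CM M \<Omega>"
    and "\<exists>x\<in>\<Omega>. \<phi> x \<noteq> 0"
    and "CM_lojasiewicz M \<Omega> \<phi>"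
  shows "\<Omega> \<inter> frontier (zero_set \<Omega> \<phi>) \<subseteq> closure (zero_set \<Omega> \<phi> - flat_points \<Omega> \<phi>)"
proof
  fix a assume a: "a \<in> \<Omega> \<inter> frontier (zero_set \<Omega> \<phi>)"
  define Z where "Z = zero_set \<Omega> \<phi>"
  define F where "F = flat_points \<Omega> \<phi>"
  show "a \<in> closure (zero_set \<Omega> \<phi> - flat_points \<Omega> \<phi>)"
  proof (rule ccontr)
    assume na: "a \<notin> closure (zero_set \<Omega> \<phi> - flat_points \<Omega> \<phi>)"
    then obtain e1 where e1: "e1 > 0" "\<forall>y\<in>Z - F. \<not> dist y a < e1"
      unfolding closure_approachable Z_def F_def by auto
    obtain e2 where e2: "e2 > 0" "cball a e2 \<subseteq> \<Omega>"
      using a assms(2) open_contains_cball by blast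
    define r where "r = min e1 e2"
    have r: "r > 0" using e1 e2 by (simp add: r_def)
    define K where "K = cball a r"
    have K: "compact K" "K \<subseteq> \<Omega>" using e2 by (auto simp: K_def r_def)
    have flatp: "\<forall>w. Dw w \<phi> p = 0" if "p \<in> Z" "dist a p < r" for p
    proof -
      have "p \<in> F" using e1(2) that by (auto simp: r_def dist_commute)
      then show ?thesis by (simp add: F_def flat_points_def)
    qed
    have sm: "smooth_on \<Omega> \<phi>" using assms(3) by (simp add: CM_def)
    obtain C \<sigma> where C: "C > 0" "\<sigma> > 0"
      and Cb: "\<forall>w. \<forall>x\<in>K. \<bar>Dw w \<phi> x\<bar> \<le> C * \<sigma> ^ length w * fact (length w) * M (length w)"
      using assms(3) K unfolding CM_def by blast
    have M00: "M 0 = 1" using assms(1) by (simp add: strongly_regular_def)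
    have Mge: "M j \<ge> 1" for j
    proof -
      have "incseq M" using assms(1) by (simp add: strongly_regular_def)
      then have "M 0 \<le> M j" by (simp add: incseq_def)
      then show ?thesis using M00 by simp
    qed
    have M0: "M j \<ge> 0" for j using Mge[of j] by simp
    have M1: "M 1 \<ge> 1" by (rule Mge)
    obtain A where A: "A > 0" "\<And>j k. M (j + k) \<le> A ^ (j + k) * M j * M k"
      using assms(1) unfolding strongly_regular_def by blast
    define N where "N = real CARD('n)"
    have N: "N > 0" by (simp add: N_def)
    define \<tau> where "\<tau> = 2 * N * \<sigma>"
    define lam where "lam = A * \<tau>"
    have tau: "\<tau> > 0" using N C by (simp add: \<tau>_def)
    have lamp: "lam > 0" using tau A by (simp add: lam_def)
    have Lo: "\<exists>C'>0. \<exists>\<sigma>'>0. \<forall>w. \<forall>x\<in>K - zero_set \<Omega> \<phi>. \<bar>Dw w (\<lambda>y. 1 / \<phi> y) x\<bar> \<le>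
             C' * \<sigma>' ^ length w * fact (length w) * M (length w) / hM M (lam * infdist x (zero_set \<Omega> \<phi>))"
      using assms(5)[unfolded CM_lojasiewicz_def, rule_format, OF conjI[OF K] lamp] .
    obtain C' \<sigma>' where C': "C' > 0"
      and Lb: "\<forall>w. \<forall>x\<in>K - Z. \<bar>Dw w (\<lambda>y. 1 / \<phi> y) x\<bar> \<le>
             C' * \<sigma>' ^ length w * fact (length w) * M (length w) / hM M (lam * infdist x Z)"
      using Lo unfolding Z_def by blast
    have L0: "\<bar>1 / \<phi> x\<bar> \<le> C' / hM M (lam * infdist x Z)" if "x \<in> K - Z" for x
      using bspec[OF spec[OF Lb, of "[]"], of x] that M00 by simp
    define \<epsilon> where "\<epsilon> = min (r / 5) (1 / (4 * lam * M 1 * C * C'))"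
    have eps: "\<epsilon> > 0" using r lamp M1 C C' by (simp add: \<epsilon>_def)
    have aZ: "a \<in> closure Z" and aI: "a \<notin> interior Z" using a by (auto simp: frontier_def Z_def)
    obtain z0 where z0: "z0 \<in> Z" "dist z0 a < \<epsilon>" using closure_approachableD[OF aZ eps] by (auto simp: dist_commute)
    obtain x where x: "x \<in> ball a \<epsilon>" "x \<notin> Z" using aI eps unfolding mem_interior by (meson subsetI)
    have "\<epsilon> \<le> r" using r by (simp add: \<epsilon>_def)
    then have xK: "x \<in> K" using x by (simp add: K_def)
    then have xO: "x \<in> \<Omega>" using K by auto
    then have phx: "\<phi> x \<noteq> 0" using x by (simp add: Z_def zero_set_def)
    define d where "d = infdist x Z"
    define h where "h = hM M (lam * d)"
    have L: "\<bar>1 / \<phi> x\<bar> \<le> C' / h" using L0[of x] xK x by (simp add: h_def d_def)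
    have hne: "h \<noteq> 0"
    proof
      assume "h = 0"
      then have "\<bar>1 / \<phi> x\<bar> \<le> 0" using L by simp
      then show False using phx by simp
    qed
    have d0: "d \<ge> 0" by (simp add: d_def infdist_nonneg)
    have dpos: "d > 0"
    proof (rule ccontr)
      assume "\<not> d > 0" then have "d = 0" using d0 by simp
      then show False using hne by (simp add: h_def hM_def)
    qed
    have hpos: "h > 0" using hM_nonneg[where M=M, OF M0, of "lam * d"] hne lamp d0 by (simp add: h_def)
    have dle: "d < 2 * \<epsilon>"
    proof -
      have "d \<le> dist x z0" using z0 by (simp add: d_def infdist_le)
      also have "\<dots> \<le> dist x a + dist a z0" by (rule dist_triangle)
      finally show ?thesis using x z0 by (simp add: dist_commute)
    qed
    have "Z \<noteq> {}" using z0 by auto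
    then have "(INF z\<in>Z. dist x z) < 2 * d" using dpos by (simp add: d_def infdist_notempty)
    then obtain p where p: "p \<in> Z" "dist x p < 2 * d"
      by (subst (asm) cINF_less_iff) (auto intro: bdd_belowI2[where m=0] simp: \<open>Z \<noteq> {}\<close>)
    have pa: "dist a p < r"
    proof -
      have "dist a p \<le> dist a x + dist x p" by (rule dist_triangle)
      also have "\<dots> < 5 * \<epsilon>" using x p dle by (simp add: dist_commute)
      also have "\<dots> \<le> r" by (simp add: \<epsilon>_def)
      finally show ?thesis .
    qed
    have flat: "\<forall>w. Dw w \<phi> p = 0" using flatp p pa by blast
    have seg: "closed_segment p x \<subseteq> K"
    proof -
      have "closed_segment p x \<subseteq> ball a r"
        using pa x \<open>\<epsilon> \<le> r\<close> by (intro closed_segment_subset) auto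
      then show ?thesis by (auto simp: K_def)
    qed
    have bound: "\<bar>\<phi> x\<bar> \<le> C * (\<tau> * d) ^ j * M j" for j
    proof -
      have "\<forall>w. \<forall>t\<in>{0..1}. \<bar>Dw w \<phi> (p + t *\<^sub>R (x - p))\<bar>
           \<le> (\<lambda>k. C * \<sigma> ^ k * fact k * M k) (length w + j) * (real CARD('n) * norm (x - p)) ^ j * t ^ j / fact j"
      proof (rule flat_est)
        show "\<forall>w. \<forall>z\<in>closed_segment p x. Dw w \<phi> differentiable (at z)"
          using sm seg K unfolding smooth_on_def by blast
        show "\<forall>w. Dw w \<phi> p = 0" by (rule flat)
        show "\<forall>w. \<forall>z\<in>closed_segment p x. \<bar>Dw w \<phi> z\<bar> \<le> C * \<sigma> ^ length w * fact (length w) * M (length w)"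
          using Cb seg by blast
      qed
      note est = this
      have "\<bar>Dw [] \<phi> (p + 1 *\<^sub>R (x - p))\<bar> \<le> (\<lambda>k. C * \<sigma> ^ k * fact k * M k) (length ([]::'n list) + j) * (real CARD('n) * norm (x - p)) ^ j * 1 ^ j / fact j"
        by (rule bspec[OF spec[OF est, of "[]"]]) simp
      then have "\<bar>\<phi> x\<bar> \<le> C * \<sigma> ^ j * fact j * M j * (N * norm (x - p)) ^ j / fact j"
        by (simp add: N_def)
      then have "\<bar>\<phi> x\<bar> \<le> C * (\<sigma> * (N * norm (x - p))) ^ j * M j"
        by (simp add: power_mult_distrib mult_ac)
      also have "\<dots> \<le> C * (\<tau> * d) ^ j * M j"
      proof -
        have "\<sigma> * (N * norm (x - p)) \<le> \<tau> * d"
          using p C N by (simp add: \<tau>_def dist_norm) 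
        then show ?thesis using C M0[of j] N
          by (intro mult_right_mono[OF mult_left_mono[OF power_mono]]) auto
      qed
      finally show ?thesis .
    qed
    have "\<bar>\<phi> x\<bar> / C \<le> hM M (\<tau> * d)"
    proof (rule hM_ge)
      show "0 < \<tau> * d" using tau dpos by simp
      fix j
      show "\<bar>\<phi> x\<bar> / C \<le> (\<tau> * d) ^ j * M j"
        unfolding pos_divide_le_eq[OF C(1)] using bound[of j] by (simp add: mult_ac)
    qed
    also have "\<tau> * d = (lam * d) / A" using A by (simp add: lam_def)
    also have "hM M ((lam * d) / A) \<le> h^2"
      unfolding h_def using hM_sq[where M=M, OF M0 _ A] lamp dpos by simp
    finally have up: "\<bar>\<phi> x\<bar> \<le> C * h^2" using C by (simp add: field_simps)
    have "h \<le> C' * \<bar>\<phi> x\<bar>" using L hpos phx C'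
      by (simp add: field_simps abs_divide)
    also have "\<dots> \<le> C' * (C * h^2)" using up C' by simp
    finally have "1 \<le> C' * C * h" using hpos by (simp add: power2_eq_square field_simps)
    moreover have "h \<le> (lam * d) ^ 1 * M 1"
      unfolding h_def using hM_le[where M=M and j=1, OF M0, of "lam * d"] lamp dpos by simp
    moreover have "(lam * d) * M 1 < lam * (2 * \<epsilon>) * M 1"
      using lamp dle M1 by simp
    moreover have "lam * (2 * \<epsilon>) * M 1 \<le> 1 / (2 * C * C')"
    proof -
      have "\<epsilon> \<le> 1 / (4 * lam * M 1 * C * C')" by (simp add: \<epsilon>_def)
      then have "(lam * 2 * M 1) * \<epsilon> \<le> (lam * 2 * M 1) * (1 / (4 * lam * M 1 * C * C'))"
        by (rule mult_left_mono) (use lamp M1 in simp)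
      moreover have "(lam * 2 * M 1) * (1 / (4 * lam * M 1 * C * C')) = 1 / (2 * C * C')"
        using lamp M1 C C' by (simp add: field_simps)
      moreover have "lam * (2 * \<epsilon>) * M 1 = (lam * 2 * M 1) * \<epsilon>" by (simp only: mult_ac)
      ultimately show ?thesis by linarith
    qed
    ultimately have h1: "h < 1 / (2 * C * C')" by simp
    have h2: "C' * C * h < C' * C * (1 / (2 * C * C'))"
      by (rule mult_strict_left_mono[OF h1]) (use C C' in simp)
    have h3: "C' * C * (1 / (2 * C * C')) = 1 / 2" using C C' by (simp add: field_simps)
    show False using \<open>1 \<le> C' * C * h\<close> h2 h3 by linarith
  qed
qed

end
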